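(* Let $T$ be a string of length $n$ and $1<i\le j\le n$. For any interval $[s,t]$ with $i\le s\le t\le j$, we have $[s,t]\notin\mathsf{MUS}(T[i-1..j])$ and $[s,t]\in\mathsf{MUS}(T[i..j])$ if and only if $T[s..t]=\mathit{sqp}_{i-1,j}$ (as strings) and $\#\mathit{occ}_{T[i-1..j]}(\mathit{sqp}_{i-1,j})=2$.
   Context: $T[a..b]$ denotes the substring of $T$ from position $a$ to $b$. For strings $S,w$, $\#\mathit{occ}_S(w)$ is the number of positions at which $w$ occurs in $S$, with $\#\mathit{occ}_S(\varepsilon)=|S|+1$. A substring $w$ of $S$ is unique in $S$ if $\#\mathit{occ}_S(w)=1$ and repeating if $\#\mathit{occ}_S(w)\ge 2$. For $1\le i\le j\le n$, $\mathsf{MUS}(T[i..j])$ is the set of intervals $[s,t]$ (positions in $T$) with $i\le s\le t\le j$ such that $T[s..t]$ is unique in $T[i..j]$ and every proper substring of $T[s..t]$ (including the empty string) is repeating in $T[i..j]$. $\mathit{sqp}_{i,j}$ is the shortest (non-empty) prefix of $T[i..j]$ that occurs at most twice in $T[i..j]$. *)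

theory Defs
  imports Main
begin

text \<open>Strings are lists; positions are 1-based. substr T a b is T[a..b].\<close>
definition substr :: "'a list \<Rightarrow> nat \<Rightarrow> nat \<Rightarrow> 'a list" where
  "substr T a b = take (Suc b - a) (drop (a - 1) T)"

text \<open>Number of (0-based) positions at which w occurs in S; occ S [] = length S + 1.\<close>
definition occ :: "'a list \<Rightarrow> 'a list \<Rightarrow> nat" where
  "occ S w = card {k. k + length w \<le> length S \<and> take (length w) (drop k S) = w}"

definition unique_in :: "'a list \<Rightarrow> 'a list \<Rightarrow> bool" where
  "unique_in S w \<longleftrightarrow> occ S w = 1"

definition repeating_in :: "'a list \<Rightarrow> 'a list \<Rightarrow> bool" where
  "repeating_in S w \<longleftrightarrow> occ S w \<ge> 2"

definition proper_substrings :: "'a list \<Rightarrow> 'a list set" where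
  "proper_substrings u = {take l (drop k u) | k l. k + l \<le> length u \<and> l < length u}"

text \<open>MUS(T[i..j]) as a set of intervals [s,t] of positions in T.\<close>
definition MUS :: "'a list \<Rightarrow> nat \<Rightarrow> nat \<Rightarrow> (nat \<times> nat) set" where
  "MUS T i j = {(s, t). i \<le> s \<and> s \<le> t \<and> t \<le> j
      \<and> unique_in (substr T i j) (substr T s t)
      \<and> (\<forall>w \<in> proper_substrings (substr T s t). repeating_in (substr T i j) w)}"

definition sqp :: "'a list \<Rightarrow> nat \<Rightarrow> nat \<Rightarrow> 'a list" where
  "sqp T i j = (let S = substr T i j in
     take (LEAST l. 1 \<le> l \<and> l \<le> length S \<and> occ S (take l S) \<le> 2) S)"

end

theory Submission
  imports Defs
begin

definition occset :: "'a list \<Rightarrow> 'a list \<Rightarrow> nat set" where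
  "occset S w = {k. k + length w \<le> length S \<and> take (length w) (drop k S) = w}"

lemma occ_occset: "occ S w = card (occset S w)"
  by (simp add: occ_def occset_def)

lemma fin_occset: "finite (occset S w)"
  by (rule finite_subset[of _ "{..length S}"]) (auto simp: occset_def)

lemma take_eq_len: "take n xs = w \<Longrightarrow> length w \<le> length xs"
  by auto

lemma occ_cons: "occ (c#S) w = occ S w + (if take (length w) (c#S) = w then 1 else 0)"
proof -
  have eq: "occset (c#S) w = (if take (length w) (c#S) = w then {0} else {}) \<union> Suc ` occset S w"
  proof (rule set_eqI)
    fix k show "k \<in> occset (c#S) w \<longleftrightarrow> k \<in> (if take (length w) (c#S) = w then {0} else {}) \<union> Suc ` occset S w"
      by (cases k) (auto simp: occset_def dest: take_eq_len)
  qed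
  have "0 \<notin> Suc ` occset S w" by auto
  then show ?thesis
    by (simp add: occ_occset eq card_image fin_occset)
qed

lemma occ_ge2:
  assumes "take (length w) (drop a X) = w" "a + length w \<le> length X"
    "take (length w) (drop b X) = w" "b + length w \<le> length X" "a \<noteq> b"
  shows "occ X w \<ge> 2"
proof -
  have "{a,b} \<subseteq> occset X w" using assms by (auto simp: occset_def)
  then have "card {a,b} \<le> occ X w" by (simp add: occ_occset card_mono fin_occset)
  then show ?thesis using assms(5) by simp
qed

lemma occ_ge1:
  assumes "take (length w) (drop a X) = w" "a + length w \<le> length X"
  shows "occ X w \<ge> 1"
proof -
  have "a \<in> occset X w" using assms by (auto simp: occset_def)
  then have "occset X w \<noteq> {}" by auto
  then show ?thesis by (simp add: occ_occset Suc_le_eq card_gt_0_iff fin_occset)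
qed

definition MUSp :: "'a list \<Rightarrow> 'a list \<Rightarrow> bool" where
  "MUSp X u \<longleftrightarrow> unique_in X u \<and> (\<forall>w \<in> proper_substrings u. repeating_in X w)"

lemma abstract:
  fixes S S' u :: "'a list" and c :: 'a
  assumes S_def: "S = c # S'"
  assumes ne: "u \<noteq> []" and p: "take (length u) (drop p S') = u" "p + length u \<le> length S'"
  shows "(\<not> MUSp S u \<and> MUSp S' u) \<longleftrightarrow>
    (u = take (LEAST l. 1 \<le> l \<and> l \<le> length S \<and> occ S (take l S) \<le> 2) S \<and>
     occ S (take (LEAST l. 1 \<le> l \<and> l \<le> length S \<and> occ S (take l S) \<le> 2) S) = 2)"
  (is "?L \<longleftrightarrow> ?R")
proof
  let ?P = "\<lambda>l. 1 \<le> l \<and> l \<le> length S \<and> occ S (take l S) \<le> 2"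
  assume L: ?L
  have oc: "occ S w = occ S' w + (if take (length w) S = w then 1 else 0)" for w
    unfolding S_def by (rule occ_cons)
  have rep: "repeating_in S w" if "w \<in> proper_substrings u" for w
  proof -
    have "occ S' w \<ge> 2" using L that unfolding MUSp_def repeating_in_def by blast
    then show ?thesis using oc[of w] by (simp add: repeating_in_def)
  qed
  have u1: "occ S' u = 1" using L unfolding MUSp_def unique_in_def by simp
  have n1: "occ S u \<noteq> 1" using L rep unfolding MUSp_def unique_in_def by blast
  have pre: "take (length u) S = u"
  proof (rule ccontr)
    assume "take (length u) S \<noteq> u"
    then have "occ S u = 1" using oc[of u] u1 by simp
    then show False using n1 by simp
  qed
  have o2: "occ S u = 2" using oc[of u] pre u1 by simp
  have Pu: "?P (length u)" using ne o2 pre take_eq_len[OF pre] by (simp add: Suc_le_eq)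
  have notP: "\<not> ?P l" if "1 \<le> l" "l < length u" for l
  proof -
    have "take l S = take l u" using pre that by (metis min.strict_order_iff take_take)
    moreover have "take l u \<in> proper_substrings u"
    proof -
      have "take l u = take l (drop 0 u) \<and> 0 + l \<le> length u \<and> l < length u" using that by simp
      then show ?thesis unfolding proper_substrings_def by blast
    qed
    ultimately have "occ S' (take l S) \<ge> 2" using L unfolding MUSp_def repeating_in_def by auto
    moreover have "take (length (take l S)) S = take l S" by (simp add: min_def)
    ultimately show ?thesis using oc[of "take l S"] by simp
  qed
  have "(LEAST l. ?P l) = length u"
  proof (rule Least_equality)
    show "?P (length u)" by (rule Pu)
    fix y assume "?P y"
    then show "length u \<le> y" using notP by (meson not_le)
  qed
  then show ?R using pre o2 by simp
next
  let ?P = "\<lambda>l. 1 \<le> l \<and> l \<le> length S \<and> occ S (take l S) \<le> 2"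
  assume R: ?R
  have oc: "occ S w = occ S' w + (if take (length w) S = w then 1 else 0)" for w
    unfolding S_def by (rule occ_cons)
  have uL: "u = take (LEAST l. ?P l) S" using R by simp
  have "take (length (take (LEAST l. ?P l) S)) S = take (LEAST l. ?P l) S" by (simp add: min_def)
  then have pre: "take (length u) S = u" using uL by simp
  hence pre': "take (length u) S = u" .
  have o2: "occ S u = 2"
  proof -
    from R have "occ S (take (LEAST l. ?P l) S) = 2" by (rule conjunct2)
    then show ?thesis using uL by simp
  qed
  have u1: "occ S' u = 1" using oc[of u] pre o2 by simp
  have lenS: "length u \<le> length S" using take_eq_len[OF pre] .
  have Pu: "?P (length u)" using ne o2 lenS pre by (simp add: Suc_le_eq)
  have le: "(LEAST l. ?P l) \<le> length u" by (rule Least_le) (rule Pu)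
  have PL: "?P (LEAST l. ?P l)" by (rule LeastI) (rule Pu)
  have Leq: "(LEAST l. ?P l) = length u"
  proof -
    have "length u = min (length S) (LEAST l. ?P l)" using uL by simp
    then show ?thesis using PL by simp
  qed
  have notP: "\<not> ?P l" if "l < length u" for l
    using not_less_Least[of l ?P] Leq that by simp
  obtain x y where xy: "occset S u = {x, y}" "x \<noteq> y"
  proof -
    have "card (occset S u) = 2" using o2 by (simp only: occ_occset)
    then have "\<exists>x y. occset S u = {x, y} \<and> x \<noteq> y" by (simp only: card_2_iff)
    then show ?thesis by (elim exE conjE) (rule that)
  qed
  obtain q where q: "q \<in> occset S u" "q \<noteq> 0"
  proof (cases "x = 0")
    case True
    then show ?thesis using that[of y] xy by simp
  next
    case False
    then show ?thesis using that[of x] xy by simp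
  qed
  have qq: "take (length u) (drop q S) = u" "q + length u \<le> length S"
    using q(1) by (auto simp: occset_def)
  have "repeating_in S' w" if w: "w \<in> proper_substrings u" for w
  proof -
    obtain k l where kl: "w = take l (drop k u)" "k + l \<le> length u" "l < length u"
      using w unfolding proper_substrings_def by blast
    show ?thesis
    proof (cases "l = 0")
      case True
      have "length u \<ge> 1" using ne by (simp add: Suc_le_eq)
      then have "length S' \<ge> 1" using p(2) by linarith
      have "{k. k + length ([]::'a list) \<le> length S' \<and> take (length ([]::'a list)) (drop k S') = []} = {..length S'}"
        by auto
      then have "occ S' [] = Suc (length S')" by (simp add: occ_def)
      moreover have "w = []" using True kl by simp
      ultimately show ?thesis using \<open>length S' \<ge> 1\<close> by (simp add: repeating_in_def)
    next
      case False
      show ?thesis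
      proof (cases "k = 0")
        case True
        have "w = take l (take (length u) S)" using kl True pre by simp
        then have wS: "w = take l S" using kl by (simp add: min_def)
        have "\<not> ?P l" using notP kl by simp
        hence "occ S w > 2" using False kl lenS wS by auto
        moreover have "take (length w) S = w" using wS by (simp add: min_def)
        ultimately show ?thesis using oc[of w] by (simp add: repeating_in_def)
      next
        case False
        have lw: "length w = l" using kl by simp
        have a1: "take l (drop k S) = w"
        proof -
          have "w = take l (drop k (take (length u) S))" using kl pre by simp
          also have "\<dots> = take l (take (length u - k) (drop k S))"
            by (simp add: drop_take)
          also have "\<dots> = take l (drop k S)" using kl by (simp add: min_def)
          finally show ?thesis by simp
        qed
        have a2: "take l (drop (q + k) S) = w"
        proof -
          have "w = take l (drop k (take (length u) (drop q S)))" using kl qq by simp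
          also have "\<dots> = take l (take (length u - k) (drop (q + k) S))"
            by (simp add: drop_take add.commute)
          also have "\<dots> = take l (drop (q + k) S)" using kl by (simp add: min_def)
          finally show ?thesis by simp
        qed
        obtain k' where k': "k = Suc k'" using False by (cases k) auto
        obtain q' where q': "q + k = Suc q'" using q by (cases "q + k") auto
        have b1: "take l (drop k' S') = w" using a1 k' by (simp add: S_def)
        have b2: "take l (drop q' S') = w" using a2 q' by (simp add: S_def)
        have "occ S' w \<ge> 2"
          by (rule occ_ge2[of w k' S' q']) (use b1 b2 lw kl qq q q' k' in \<open>auto simp: S_def\<close>)
        then show ?thesis by (simp add: repeating_in_def)
      qed
    qed
  qed
  then have "MUSp S' u" using u1 by (simp add: MUSp_def unique_in_def)
  moreover have "\<not> MUSp S u" using o2 by (simp add: MUSp_def unique_in_def)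
  ultimately show ?L by simp
qed

theorem lemma17:
  fixes T :: "'a list" and i j s t :: nat
  assumes "1 < i" "i \<le> j" "j \<le> length T"
    and "i \<le> s" "s \<le> t" "t \<le> j"
  shows "((s, t) \<notin> MUS T (i - 1) j \<and> (s, t) \<in> MUS T i j) \<longleftrightarrow>
         (substr T s t = sqp T (i - 1) j \<and> occ (substr T (i - 1) j) (sqp T (i - 1) j) = 2)"
proof -
  have m1: "(s, t) \<in> MUS T (i - 1) j \<longleftrightarrow> MUSp (substr T (i - 1) j) (substr T s t)"
    using assms by (auto simp: MUS_def MUSp_def)
  have m2: "(s, t) \<in> MUS T i j \<longleftrightarrow> MUSp (substr T i j) (substr T s t)"
    using assms by (auto simp: MUS_def MUSp_def)
  have cons: "substr T (i - 1) j = T ! (i - 2) # substr T i j"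
  proof -
    have "drop (i - 2) T = T ! (i - 2) # drop (i - 1) T"
    proof -
      have a: "i - 2 < length T" using assms by simp
      have b: "Suc (i - 2) = i - 1" using assms by simp
      show ?thesis using Cons_nth_drop_Suc[OF a] b by simp
    qed
    moreover have "Suc j - (i - 1) = Suc (Suc j - i)" using assms by simp
    moreover have "i - 1 - 1 = i - 2" by simp
    ultimately show ?thesis by (simp add: substr_def)
  qed
  have ne: "substr T s t \<noteq> []" using assms by (simp add: substr_def)
  have len: "length (substr T s t) = Suc t - s" using assms by (simp add: substr_def)
  have p1: "take (length (substr T s t)) (drop (s - i) (substr T i j)) = substr T s t"
    using assms by (simp add: substr_def len drop_take min_def)
  have p2: "s - i + length (substr T s t) \<le> length (substr T i j)"
    using assms len by (simp add: substr_def)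
  show ?thesis
    unfolding m1 m2 sqp_def Let_def cons
    by (rule abstract[OF refl ne p1 p2])
qed

end
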